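(* Let $m,n\ge1$ and consider the quantum Boltzmann machine $\mathrm{QBM}_{m,n}$ on $(\mathbb{C}^2)^{\otimes(m+n)}$, whose first $m$ qubits are visible ($\mathcal{H}_\mathrm{V}=(\mathbb{C}^2)^{\otimes m}$) and last $n$ qubits hidden ($\mathcal{H}_\mathrm{L}=(\mathbb{C}^2)^{\otimes n}$), with Hamiltonian $$\mathrm{H}=-\sum_{i=1}^{m+n}b_i\sigma^z_i-\sum_{i>j}w_{ij}\sigma^z_i\sigma^z_j-\sum_{i=1}^{m+n}\Gamma_i\sigma^x_i,$$ real parameters $b_i,w_{ij},\Gamma_i$, and density operator $\rho=e^{\mathrm{H}}/\mathrm{Tr}\,e^{\mathrm{H}}$. Then $\rho$ is a CQ-LVM if and only if $\Gamma_i=0$ for all $i\le m$.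
   Context: $\sigma^k_i=\mathrm{I}^{\otimes(i-1)}\otimes\sigma^k\otimes\mathrm{I}^{\otimes(m+n-i)}$ for $k\in\{x,z\}$, with $\sigma^z=\begin{psmallmatrix}1&0\\0&-1\end{psmallmatrix}$, $\sigma^x=\begin{psmallmatrix}0&1\\1&0\end{psmallmatrix}$ and $\mathrm{I}$ the $2\times2$ identity. A CQ-LVM is a density operator on $\mathcal{H}_\mathrm{V}\otimes\mathcal{H}_\mathrm{L}$ that is block diagonal with respect to the standard (computational) basis $\{\mathbf{v}_i\}$ of $\mathcal{H}_\mathrm{V}$, i.e. of the form $\sum_i\mathbf{v}_i\mathbf{v}_i^\dagger\otimes\rho_\mathrm{L}(i)$. *)

theory Defs
  imports Complex_Main "Jordan_Normal_Form.Matrix"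
begin

text \<open>Kronecker (tensor) product; the index of the left factor is the most significant one.\<close>
definition kron :: "complex mat \<Rightarrow> complex mat \<Rightarrow> complex mat" where
  "kron A B = mat (dim_row A * dim_row B) (dim_col A * dim_col B)
     (\<lambda>(i,j). A $$ (i div dim_row B, j div dim_col B) * B $$ (i mod dim_row B, j mod dim_col B))"

definition msum :: "nat \<Rightarrow> ('i \<Rightarrow> complex mat) \<Rightarrow> 'i set \<Rightarrow> complex mat" where
  "msum d f S = mat d d (\<lambda>ij. \<Sum>a\<in>S. f a $$ ij)"

definition mat_exp :: "complex mat \<Rightarrow> complex mat" where
  "mat_exp A = mat (dim_row A) (dim_col A) (\<lambda>ij. \<Sum>k. (A ^\<^sub>m k) $$ ij / of_nat (fact k))"

definition mtrace :: "complex mat \<Rightarrow> complex" where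
  "mtrace A = (\<Sum>i<dim_row A. A $$ (i,i))"

definition hermitian :: "complex mat \<Rightarrow> bool" where
  "hermitian A \<longleftrightarrow> square_mat A \<and> (\<forall>i<dim_row A. \<forall>j<dim_row A. A $$ (i,j) = cnj (A $$ (j,i)))"

definition psd :: "complex mat \<Rightarrow> bool" where
  "psd A \<longleftrightarrow> square_mat A \<and> (\<forall>v \<in> carrier_vec (dim_row A).
      (let q = (\<Sum>i<dim_row A. \<Sum>j<dim_row A. cnj (v $ i) * A $$ (i,j) * v $ j) in Im q = 0 \<and> Re q \<ge> 0))"

definition density_op :: "nat \<Rightarrow> complex mat \<Rightarrow> bool" where
  "density_op d A \<longleftrightarrow> A \<in> carrier_mat d d \<and> hermitian A \<and> psd A \<and> mtrace A = 1"

definition outer :: "complex vec \<Rightarrow> complex mat" where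
  "outer v = mat (dim_vec v) (dim_vec v) (\<lambda>(a,b). v $ a * cnj (v $ b))"

definition sigma_z :: "complex mat" where
  "sigma_z = mat 2 2 (\<lambda>(i,j). if i = j then (if i = 0 then 1 else -1) else 0)"

definition sigma_x :: "complex mat" where
  "sigma_x = mat 2 2 (\<lambda>(i,j). if i = j then 0 else 1)"

fun id_pow :: "nat \<Rightarrow> complex mat" where
  "id_pow 0 = 1\<^sub>m 1"
| "id_pow (Suc k) = kron (1\<^sub>m 2) (id_pow k)"

text \<open>sigma^k_i = I^{\<otimes>(i-1)} \<otimes> sigma^k \<otimes> I^{\<otimes>(N-i)} on N qubits (i is 1-based).\<close>
definition sigma_at :: "nat \<Rightarrow> complex mat \<Rightarrow> nat \<Rightarrow> complex mat" where
  "sigma_at N s i = kron (kron (id_pow (i - 1)) s) (id_pow (N - i))"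

definition qbm_hamiltonian ::
  "nat \<Rightarrow> nat \<Rightarrow> (nat \<Rightarrow> real) \<Rightarrow> (nat \<Rightarrow> nat \<Rightarrow> real) \<Rightarrow> (nat \<Rightarrow> real) \<Rightarrow> complex mat" where
  "qbm_hamiltonian m n b w \<Gamma> =
     (let N = m + n; d = 2 ^ N in
      mat d d (\<lambda>ij.
          - (\<Sum>i\<in>{1..N}. complex_of_real (b i) * sigma_at N sigma_z i $$ ij)
          - (\<Sum>(i,j)\<in>{(i,j). i \<in> {1..N} \<and> j \<in> {1..N} \<and> j < i}.
                complex_of_real (w i j) * (sigma_at N sigma_z i * sigma_at N sigma_z j) $$ ij)
          - (\<Sum>i\<in>{1..N}. complex_of_real (\<Gamma> i) * sigma_at N sigma_x i $$ ij)))"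

definition qbm_state ::
  "nat \<Rightarrow> nat \<Rightarrow> (nat \<Rightarrow> real) \<Rightarrow> (nat \<Rightarrow> nat \<Rightarrow> real) \<Rightarrow> (nat \<Rightarrow> real) \<Rightarrow> complex mat" where
  "qbm_state m n b w \<Gamma> =
     (let E = mat_exp (qbm_hamiltonian m n b w \<Gamma>) in (1 / mtrace E) \<cdot>\<^sub>m E)"

definition CQ_LVM :: "nat \<Rightarrow> nat \<Rightarrow> complex mat \<Rightarrow> bool" where
  "CQ_LVM m n \<rho> \<longleftrightarrow> density_op (2 ^ (m + n)) \<rho> \<and>
     (\<exists>\<rho>L :: nat \<Rightarrow> complex mat. (\<forall>i < 2 ^ m. \<rho>L i \<in> carrier_mat (2 ^ n) (2 ^ n)) \<and>
        \<rho> = msum (2 ^ (m + n)) (\<lambda>i. kron (outer (unit_vec (2 ^ m) i)) (\<rho>L i)) {..< 2 ^ m})"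

end

theory Submission
  imports Defs
begin


lemma kron_carrier: "A \<in> carrier_mat a a' \<Longrightarrow> B \<in> carrier_mat c c' \<Longrightarrow> kron A B \<in> carrier_mat (a*c) (a'*c')"
  by (simp add: kron_def)

lemma kron_index: "A \<in> carrier_mat a a' \<Longrightarrow> B \<in> carrier_mat c c' \<Longrightarrow> i < a*c \<Longrightarrow> j < a'*c' \<Longrightarrow>
  kron A B $$ (i,j) = A $$ (i div c, j div c') * B $$ (i mod c, j mod c')"
  by (simp add: kron_def)

lemma divmod_eq_iff: "((i::nat) = j) \<longleftrightarrow> (i div p = j div p \<and> i mod p = j mod p)"
  by (metis div_mult_mod_eq)

lemma id_pow_eq: "id_pow k = 1\<^sub>m (2^k)"
proof (induction k)
  case 0 then show ?case by simp
next
  case (Suc k)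
  have c: "kron (1\<^sub>m 2) (1\<^sub>m (2^k)) \<in> carrier_mat (2*2^k) (2*2^k)"
    by (rule kron_carrier) auto
  show ?case
  proof (rule eq_matI)
    fix i j assume "i < dim_row (1\<^sub>m (2 ^ Suc k) :: complex mat)" "j < dim_col (1\<^sub>m (2 ^ Suc k) :: complex mat)"
    then have ij: "i < 2*2^k" "j < 2*2^k" by auto
    then have "i div 2^k < 2" "j div 2^k < 2"
      by (auto simp: less_mult_imp_div_less mult.commute)
    then show "id_pow (Suc k) $$ (i, j) = 1\<^sub>m (2 ^ Suc k) $$ (i, j)"
      using ij Suc by (simp add: kron_index[of _ 2 2 _ "2^k" "2^k"] divmod_eq_iff[of i j "2^k"])
  qed (use c Suc in auto)
qed

definition zb :: "nat \<Rightarrow> nat \<Rightarrow> real" where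
  "zb a x = (if bit x a then -1 else 1)"

definition fl :: "nat \<Rightarrow> nat \<Rightarrow> nat \<Rightarrow> bool" where
  "fl a x y \<longleftrightarrow> (\<forall>j. j \<noteq> a \<longrightarrow> bit x j = bit y j) \<and> bit x a \<noteq> bit y a"

lemma fl_sym: "fl a x y = fl a y x" unfolding fl_def by auto

lemma eq_bits3: "((x::nat) = y) \<longleftrightarrow> (x div 2^a div 2 = y div 2^a div 2 \<and> x div 2^a mod 2 = y div 2^a mod 2 \<and> x mod 2^a = y mod 2^a)"
  by (metis divmod_eq_iff)

lemma fl_bits3: "fl a x y \<longleftrightarrow> (x div 2^a div 2 = y div 2^a div 2 \<and> x div 2^a mod 2 \<noteq> y div 2^a mod 2 \<and> x mod 2^a = y mod 2^a)"
proof -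
  have hi: "(x div 2^a div 2 = y div 2^a div 2) \<longleftrightarrow> (\<forall>j>a. bit x j = bit y j)"
  proof -
    have e: "z div 2^a div 2 = drop_bit (Suc a) z" for z :: nat
      by (simp add: drop_bit_eq_div power_Suc2 div_mult2_eq[symmetric] mult.commute)
    have "(drop_bit (Suc a) x = drop_bit (Suc a) y) \<longleftrightarrow> (\<forall>j. bit x (Suc a + j) = bit y (Suc a + j))"
      by (auto simp: bit_eq_iff bit_drop_bit_eq)
    also have "\<dots> \<longleftrightarrow> (\<forall>j>a. bit x j = bit y j)"
      by (metis less_imp_Suc_add add_Suc less_add_Suc1 add_Suc_shift)
    finally show ?thesis by (simp add: e)
  qed
  have lo: "(x mod 2^a = y mod 2^a) \<longleftrightarrow> (\<forall>j<a. bit x j = bit y j)"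
  proof -
    have "(take_bit a x = take_bit a y) \<longleftrightarrow> (\<forall>j<a. bit x j = bit y j)"
      by (auto simp: bit_eq_iff bit_take_bit_iff)
    then show ?thesis by (simp add: take_bit_eq_mod)
  qed
  have md: "(x div 2^a mod 2 \<noteq> y div 2^a mod 2) \<longleftrightarrow> bit x a \<noteq> bit y a"
    unfolding bit_iff_odd by (simp add: mod2_eq_if)
  show ?thesis unfolding fl_def hi lo md
    using nat_neq_iff by auto
qed

lemma zb_mod: "zb a x = (if x div 2^a mod 2 = 0 then 1 else -1)"
  by (simp add: zb_def bit_iff_odd even_iff_mod_2_eq_zero)

lemma sigma_at_entry:
  assumes s: "s \<in> carrier_mat 2 2" and i: "1 \<le> i" "i \<le> N" and x: "x < 2^N" and y: "y < 2^N"
  shows "sigma_at N s i $$ (x,y) = (if x div 2^(N-i) div 2 = y div 2^(N-i) div 2 \<and> x mod 2^(N-i) = y mod 2^(N-i)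
      then s $$ (x div 2^(N-i) mod 2, y div 2^(N-i) mod 2) else 0)"
proof -
  define P where "P = (2::nat)^(i-1)"
  define Q where "Q = (2::nat)^(N-i)"
  have PQ: "P*2*Q = 2^N" unfolding P_def Q_def using i
    by (metis Suc_diff_le diff_Suc_1 le_add_diff_inverse power_Suc2 power_add ordered_cancel_comm_monoid_diff_class.le_imp_diff_is_add)
  have k1: "kron (1\<^sub>m P) s \<in> carrier_mat (P*2) (P*2)" by (rule kron_carrier[OF _ s]) auto
  have xq: "x div Q < P*2" "y div Q < P*2" using x y PQ
    by (metis less_mult_imp_div_less mult.commute)+
  have "sigma_at N s i $$ (x,y) = kron (1\<^sub>m P) s $$ (x div Q, y div Q) * 1\<^sub>m Q $$ (x mod Q, y mod Q)"
    unfolding sigma_at_def id_pow_eq P_def[symmetric] Q_def[symmetric]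
    by (rule kron_index[OF k1, of _ Q Q]) (use x y PQ in auto)
  also have "\<dots> = (if x div Q div 2 = y div Q div 2 then s $$ (x div Q mod 2, y div Q mod 2) else 0) * (if x mod Q = y mod Q then 1 else 0)"
    using xq s Q_def
    by (simp add: kron_index[OF _ s, of "1\<^sub>m P" P P] less_mult_imp_div_less)
  finally show ?thesis unfolding Q_def by auto
qed

lemma sz_entry:
  assumes i: "1 \<le> i" "i \<le> N" and x: "x < 2^N" and y: "y < 2^N"
  shows "sigma_at N sigma_z i $$ (x,y) = (if x = y then complex_of_real (zb (N-i) x) else 0)"
proof -
  have s: "sigma_z \<in> carrier_mat 2 2" by (simp add: sigma_z_def)
  have lt: "x div 2 ^ (N - i) mod 2 < 2" "y div 2 ^ (N - i) mod 2 < 2" by auto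
  show ?thesis
    unfolding sigma_at_entry[OF s i x y] using lt
    by (simp add: sigma_z_def zb_mod eq_bits3[of x y "N-i"])
qed

lemma sx_entry:
  assumes i: "1 \<le> i" "i \<le> N" and x: "x < 2^N" and y: "y < 2^N"
  shows "sigma_at N sigma_x i $$ (x,y) = (if fl (N-i) x y then 1 else 0)"
proof -
  have s: "sigma_x \<in> carrier_mat 2 2" by (simp add: sigma_x_def)
  have lt: "x div 2 ^ (N - i) mod 2 < 2" "y div 2 ^ (N - i) mod 2 < 2" by auto
  show ?thesis
    unfolding sigma_at_entry[OF s i x y] using lt
    by (simp add: sigma_x_def fl_bits3)
qed

lemma sigma_at_carrier: "s \<in> carrier_mat 2 2 \<Longrightarrow> 1 \<le> i \<Longrightarrow> i \<le> N \<Longrightarrow> sigma_at N s i \<in> carrier_mat (2^N) (2^N)"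
proof -
  assume s: "s \<in> carrier_mat 2 2" and i: "1 \<le> i" "i \<le> N"
  have PQ: "2^(i-1)*2*2^(N-i) = (2::nat)^N" using i
    by (metis Suc_diff_le diff_Suc_1 le_add_diff_inverse power_Suc2 power_add ordered_cancel_comm_monoid_diff_class.le_imp_diff_is_add)
  show ?thesis unfolding sigma_at_def id_pow_eq
    using kron_carrier[OF kron_carrier[OF _ s] , of "1\<^sub>m (2^(i-1))" "2^(i-1)" "2^(i-1)" "1\<^sub>m (2^(N-i))" "2^(N-i)" "2^(N-i)"] PQ
    by auto
qed



fun mp :: "nat \<Rightarrow> (nat \<Rightarrow> nat \<Rightarrow> real) \<Rightarrow> nat \<Rightarrow> nat \<Rightarrow> nat \<Rightarrow> real" where
  "mp d A 0 = (\<lambda>x y. if x = y then 1 else 0)"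
| "mp d A (Suc k) = (\<lambda>x y. \<Sum>u<d. mp d A k x u * A u y)"

lemma mp_bridge:
  assumes A: "A \<in> carrier_mat d d" and a: "\<And>x y. x < d \<Longrightarrow> y < d \<Longrightarrow> A $$ (x,y) = complex_of_real (a x y)"
  shows "x < d \<Longrightarrow> y < d \<Longrightarrow> (A ^\<^sub>m k) $$ (x,y) = complex_of_real (mp d a k x y)"
proof (induction k arbitrary: x y)
  case 0 then show ?case using A by auto
next
  case (Suc k)
  have "(A ^\<^sub>m Suc k) $$ (x,y) = (\<Sum>u<d. (A ^\<^sub>m k) $$ (x,u) * A $$ (u,y))"
    using Suc.prems A by (simp add: scalar_prod_def lessThan_atLeast0)
  also have "\<dots> = (\<Sum>u<d. complex_of_real (mp d a k x u * a u y))"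
    using Suc by (intro sum.cong) (auto simp: a)
  finally show ?case by simp
qed

lemma mp_bound:
  assumes K: "\<And>u v. u < d \<Longrightarrow> v < d \<Longrightarrow> \<bar>a u v\<bar> \<le> K" and K0: "0 \<le> K"
  shows "x < d \<Longrightarrow> y < d \<Longrightarrow> \<bar>mp d a k x y\<bar> \<le> (real d * K) ^ k"
proof (induction k arbitrary: x y)
  case 0 then show ?case by auto
next
  case (Suc k)
  have "\<bar>mp d a (Suc k) x y\<bar> \<le> (\<Sum>u<d. \<bar>mp d a k x u * a u y\<bar>)"
    by (simp add: sum_abs del: abs_mult)
  also have "\<dots> \<le> (\<Sum>u<d. (real d * K) ^ k * K)"
    using Suc by (intro sum_mono) (auto simp: abs_mult K0 intro!: mult_mono K K0)
  finally show ?case by (simp add: algebra_simps)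
qed

lemma mp_summable:
  assumes K: "\<And>u v. u < d \<Longrightarrow> v < d \<Longrightarrow> \<bar>a u v\<bar> \<le> K" and K0: "0 \<le> K"
    and xy: "x < d" "y < d"
  shows "summable (\<lambda>k. norm (mp d a k x y / fact k))"
proof (rule summable_comparison_test[OF _ summable_exp[of "real d * K"]])
  show "\<exists>N. \<forall>n\<ge>N. norm (norm (mp d a n x y / fact n)) \<le> inverse (fact n) * (real d * K) ^ n"
    using mp_bound[OF K K0 xy] by (auto simp: divide_simps)
qed

lemma mp_summable':
  assumes K: "\<And>u v. u < d \<Longrightarrow> v < d \<Longrightarrow> \<bar>a u v\<bar> \<le> K" and K0: "0 \<le> K"
    and xy: "x < d" "y < d"
  shows "summable (\<lambda>k. mp d a k x y / fact k)"
  using summable_norm_cancel[OF mp_summable[OF assms]] .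

lemma bound_exists: fixes a :: "nat \<Rightarrow> nat \<Rightarrow> real" and d :: nat shows "\<exists>K\<ge>0. \<forall>u v. u < d \<longrightarrow> v < d \<longrightarrow> \<bar>a u v\<bar> \<le> (K::real)"
proof -
  let ?K = "\<Sum>u<d. \<Sum>v<d. \<bar>a u v\<bar>"
  have "\<bar>a u v\<bar> \<le> ?K" if "u < d" "v < d" for u v
  proof -
    have "\<bar>a u v\<bar> \<le> (\<Sum>v<d. \<bar>a u v\<bar>)"
      using that by (intro member_le_sum) auto
    also have "\<dots> \<le> ?K"
      using that by (intro member_le_sum[of u]) (simp_all add: sum_nonneg)
    finally show ?thesis .
  qed
  moreover have "0 \<le> ?K" by (intro sum_nonneg) auto
  ultimately show ?thesis by blast
qed

lemma mp_summable_gen: "x < d \<Longrightarrow> y < d \<Longrightarrow> summable (\<lambda>k. norm (mp d a k x y / fact k))"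
  using bound_exists[of d a] mp_summable by blast

lemma mp_summable_gen': "x < d \<Longrightarrow> y < d \<Longrightarrow> summable (\<lambda>k. mp d a k x y / fact k)"
  using bound_exists[of d a] mp_summable' by blast

lemma mp_add:
  "x < d \<Longrightarrow> y < d \<Longrightarrow> mp d a (i + j) x y = (\<Sum>u<d. mp d a i x u * mp d a j u y)"
proof (induction j arbitrary: y)
  case 0
  have "(\<Sum>u<d. mp d a i x u * mp d a 0 u y) = (\<Sum>u<d. if u = y then mp d a i x u else 0)"
    by (intro sum.cong) auto
  then show ?case using 0 by simp
next
  case (Suc j)
  have "mp d a (i + Suc j) x y = (\<Sum>v<d. (\<Sum>u<d. mp d a i x u * mp d a j u v) * a v y)"
    using Suc by simp
  also have "\<dots> = (\<Sum>u<d. mp d a i x u * (\<Sum>v<d. mp d a j u v * a v y))"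
    by (simp add: sum_distrib_left sum_distrib_right mult.assoc) (rule sum.swap)
  finally show ?case by simp
qed

lemma mp_one: "x < d \<Longrightarrow> mp d a 1 x y = a x y"
proof -
  assume x: "x < d"
  have "mp d a (Suc 0) x y = (\<Sum>u<d. (if x = u then 1 else 0) * a u y)" by simp
  also have "\<dots> = (\<Sum>u<d. if u = x then a x y else 0)" by (rule sum.cong) auto
  finally show ?thesis using x by simp
qed

lemma mp_sym:
  assumes s: "\<And>u v. u < d \<Longrightarrow> v < d \<Longrightarrow> a u v = a v u"
  shows "x < d \<Longrightarrow> y < d \<Longrightarrow> mp d a k x y = mp d a k y x"
proof (induction k arbitrary: x y)
  case 0 then show ?case by auto
next
  case (Suc k)
  have "mp d a (Suc k) y x = mp d a (1 + k) y x" by simp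
  also have "\<dots> = (\<Sum>u<d. mp d a 1 y u * mp d a k u x)"
    using Suc.prems by (intro mp_add) auto
  also have "\<dots> = (\<Sum>u<d. a y u * mp d a k u x)"
    using Suc.prems by (intro sum.cong refl, subst mp_one) auto
  also have "\<dots> = (\<Sum>u<d. mp d a k x u * a u y)"
    using Suc by (intro sum.cong refl) (auto simp: s)
  finally show ?case by simp
qed

definition qf :: "nat \<Rightarrow> (nat \<Rightarrow> nat \<Rightarrow> real) \<Rightarrow> (nat \<Rightarrow> real) \<Rightarrow> real" where
  "qf d a v = (\<Sum>x<d. \<Sum>y<d. v x * a x y * v y)"

lemma mp_one': "x < d \<Longrightarrow> mp d a (Suc 0) x y = a x y"
  using mp_one[of x d a y] by simp

lemma mp_psd:
  assumes s: "\<And>u v. u < d \<Longrightarrow> v < d \<Longrightarrow> a u v = a v u"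
    and p: "\<And>v. qf d a v \<ge> 0"
  shows "qf d (mp d a k) v \<ge> 0"
proof -
  define i where "i = k div 2"
  have k: "k = i + i \<or> k = i + (1 + i)" unfolding i_def by presburger
  define wv where "wv u = (\<Sum>y<d. mp d a i u y * v y)" for u
  have split2: "qf d (\<lambda>x y. \<Sum>u<d. mp d a i x u * B u y) v = (\<Sum>u<d. wv u * (\<Sum>y<d. B u y * v y))" for B
  proof -
    have "qf d (\<lambda>x y. \<Sum>u<d. mp d a i x u * B u y) v = (\<Sum>x<d. \<Sum>y<d. \<Sum>u<d. v x * mp d a i x u * B u y * v y)"
      unfolding qf_def by (simp add: sum_distrib_left sum_distrib_right mult.assoc)
    also have "\<dots> = (\<Sum>x<d. \<Sum>u<d. \<Sum>y<d. v x * mp d a i x u * B u y * v y)"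
      by (rule sum.cong[OF refl], rule sum.swap)
    also have "\<dots> = (\<Sum>u<d. \<Sum>x<d. \<Sum>y<d. v x * mp d a i x u * B u y * v y)"
      by (rule sum.swap)
    also have "\<dots> = (\<Sum>u<d. (\<Sum>x<d. mp d a i u x * v x) * (\<Sum>y<d. B u y * v y))"
    proof (rule sum.cong[OF refl])
      fix u assume u: "u \<in> {..<d}"
      have "(\<Sum>x<d. \<Sum>y<d. v x * mp d a i x u * B u y * v y) = (\<Sum>x<d. \<Sum>y<d. (mp d a i u x * v x) * (B u y * v y))"
        using u by (intro sum.cong refl) (simp add: mp_sym[OF s])
      also have "\<dots> = (\<Sum>x<d. mp d a i u x * v x) * (\<Sum>y<d. B u y * v y)"
        by (simp add: sum_product)
      finally show "(\<Sum>x<d. \<Sum>y<d. v x * mp d a i x u * B u y * v y) = (\<Sum>x<d. mp d a i u x * v x) * (\<Sum>y<d. B u y * v y)" .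
    qed
    finally show ?thesis unfolding wv_def .
  qed
  have eqa: "qf d (mp d a k) v = qf d (\<lambda>x y. \<Sum>u<d. mp d a i x u * mp d a (k - i) u y) v"
    unfolding qf_def using k by (intro sum.cong refl) (metis add_diff_cancel_left' lessThan_iff mp_add)
  show ?thesis
  proof (cases "k = i + i")
    case True
    have "qf d (mp d a k) v = (\<Sum>u<d. wv u * wv u)"
      unfolding eqa split2 using True by (simp add: wv_def)
    also have "\<dots> \<ge> 0" by (intro sum_nonneg) auto
    finally show ?thesis .
  next
    case False
    then have kk: "k - i = 1 + i" using k by auto
    have "(\<Sum>y<d. mp d a (1+i) u y * v y) = (\<Sum>z<d. a u z * wv z)" if "u < d" for u
    proof -
      have "(\<Sum>y<d. mp d a (1+i) u y * v y) = (\<Sum>y<d. \<Sum>z<d. a u z * mp d a i z y * v y)"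
        using that by (intro sum.cong refl, subst mp_add) (auto simp: mp_one mp_one' sum_distrib_right simp del: mp.simps)
      also have "\<dots> = (\<Sum>z<d. a u z * wv z)"
        unfolding wv_def by (subst sum.swap) (simp add: sum_distrib_left mult.assoc)
      finally show ?thesis .
    qed
    then have "qf d (mp d a k) v = (\<Sum>u<d. wv u * (\<Sum>z<d. a u z * wv z))"
      unfolding eqa split2 kk by (intro sum.cong) auto
    also have "\<dots> = qf d a wv"
      unfolding qf_def by (simp add: sum_distrib_left mult.assoc)
    finally show ?thesis using p by simp
  qed
qed

lemma mp_shift:
  fixes a :: "nat \<Rightarrow> nat \<Rightarrow> real"
  shows "x < d \<Longrightarrow> y < d \<Longrightarrow> mp d (\<lambda>u v. a u v + (if u = v then c else 0)) k x y
     = (\<Sum>i\<le>k. of_nat (k choose i) * c^i * mp d a (k-i) x y)"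
proof (induction k arbitrary: y)
  case 0 then show ?case by simp
next
  case (Suc k)
  let ?S = "\<lambda>u v. a u v + (if u = v then c else 0)"
  have "mp d ?S (Suc k) x y = (\<Sum>u<d. mp d ?S k x u * a u y) + (\<Sum>u<d. mp d ?S k x u * (if u = y then c else 0))"
    by (simp add: distrib_left sum.distrib)
  also have "(\<Sum>u<d. mp d ?S k x u * (if u = y then c else 0)) = c * mp d ?S k x y"
  proof -
    have "(\<Sum>u<d. mp d ?S k x u * (if u = y then c else 0)) = (\<Sum>u<d. if u = y then c * mp d ?S k x y else 0)"
      by (intro sum.cong) auto
    then show ?thesis using Suc.prems by simp
  qed
  also have "(\<Sum>u<d. mp d ?S k x u * a u y) = (\<Sum>u<d. \<Sum>i\<le>k. of_nat (k choose i) * c^i * (mp d a (k-i) x u * a u y))"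
    using Suc by (intro sum.cong refl) (simp add: sum_distrib_right mult.assoc)
  also have "\<dots> = (\<Sum>i\<le>k. of_nat (k choose i) * c^i * mp d a (Suc k - i) x y)"
    by (subst sum.swap) (auto simp: sum_distrib_left Suc_diff_le intro!: sum.cong)
  also have "\<dots> = (\<Sum>i\<le>Suc k. of_nat (k choose i) * c^i * mp d a (Suc k - i) x y)"
    by simp
  also have "\<dots> = mp d a (Suc k) x y + (\<Sum>i\<le>k. of_nat (k choose Suc i) * c^(Suc i) * mp d a (k - i) x y)"
    by (subst sum.atMost_Suc_shift) simp
  also have "c * mp d ?S k x y = (\<Sum>i\<le>k. of_nat (k choose i) * c^(Suc i) * mp d a (k - i) x y)"
    using Suc by (simp add: sum_distrib_left mult.assoc mult.left_commute)
  finally have "mp d ?S (Suc k) x y = mp d a (Suc k) x y + (\<Sum>i\<le>k. of_nat (Suc k choose Suc i) * c^(Suc i) * mp d a (k - i) x y)"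
    by (simp add: sum.distrib[symmetric] algebra_simps)
  also have "\<dots> = (\<Sum>i\<le>Suc k. of_nat (Suc k choose i) * c^i * mp d a (Suc k - i) x y)"
    by (subst sum.atMost_Suc_shift) simp
  finally show ?case .
qed

lemma exp_series: "(\<Sum>i. c^i / fact i) = exp (c::real)"
  using exp_converges[of c] by (simp add: sums_iff divide_inverse mult.commute scaleR_conv_of_real)

lemma mp_exp_shift:
  fixes a :: "nat \<Rightarrow> nat \<Rightarrow> real"
  assumes xy: "x < d" "y < d"
  shows "(\<Sum>k. mp d (\<lambda>u v. a u v + (if u = v then c else 0)) k x y / fact k) = exp c * (\<Sum>k. mp d a k x y / fact k)"
proof -
  have s1: "summable (\<lambda>i. norm (c^i / fact i))"
    using summable_exp[of "\<bar>c\<bar>"] by (simp add: abs_mult power_abs divide_inverse mult.commute)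
  have s2: "summable (\<lambda>k. norm (mp d a k x y / fact k))" by (rule mp_summable_gen[OF xy])
  have "exp c * (\<Sum>k. mp d a k x y / fact k) = (\<Sum>k. \<Sum>i\<le>k. c^i / fact i * (mp d a (k-i) x y / fact (k-i)))"
    unfolding exp_series[symmetric] by (rule Cauchy_product[OF s1 s2])
  also have "\<dots> = (\<Sum>k. mp d (\<lambda>u v. a u v + (if u = v then c else 0)) k x y / fact k)"
  proof (rule suminf_cong)
    fix k
    have "mp d (\<lambda>u v. a u v + (if u = v then c else 0)) k x y / fact k
       = (\<Sum>i\<le>k. of_nat (k choose i) / fact k * c^i * mp d a (k-i) x y)"
      by (simp add: mp_shift[OF xy] sum_divide_distrib)
    also have "\<dots> = (\<Sum>i\<le>k. c^i / fact i * (mp d a (k-i) x y / fact (k-i)))"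
      by (intro sum.cong refl) (simp add: binomial_fact field_simps)
    finally show "(\<Sum>i\<le>k. c^i / fact i * (mp d a (k-i) x y / fact (k-i))) = mp d (\<lambda>u v. a u v + (if u = v then c else 0)) k x y / fact k" by simp
  qed
  finally show ?thesis by simp
qed

lemma gersh:
  fixes a :: "nat \<Rightarrow> nat \<Rightarrow> real"
  assumes c: "c = (\<Sum>x<d. \<Sum>y<d. \<bar>a x y\<bar>)"
  shows "qf d (\<lambda>u v. a u v + (if u = v then c else 0)) v \<ge> 0"
proof -
  have rows: "(\<Sum>y<d. \<bar>a x y\<bar>) \<le> c" if "x < d" for x
    unfolding c using that by (intro member_le_sum[of x, where f="\<lambda>x. \<Sum>y<d. \<bar>a x y\<bar>"]) (auto intro!: sum_nonneg)
  have cols: "(\<Sum>x<d. \<bar>a x y\<bar>) \<le> c" if "y < d" for y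
  proof -
    have "c = (\<Sum>y<d. \<Sum>x<d. \<bar>a x y\<bar>)" unfolding c by (rule sum.swap)
    then show ?thesis using that by (simp add: member_le_sum[of y, where f="\<lambda>y. \<Sum>x<d. \<bar>a x y\<bar>"] sum_nonneg)
  qed
  have diag: "(\<Sum>y<d. v x * (if x = y then c else 0) * v y) = c * (v x)^2" if "x < d" for x
  proof -
    have "(\<Sum>y<d. v x * (if x = y then c else 0) * v y) = (\<Sum>y<d. if y = x then c * (v x)^2 else 0)"
      by (intro sum.cong) (auto simp: power2_eq_square)
    then show ?thesis using that by simp
  qed
  have "qf d (\<lambda>u v. a u v + (if u = v then c else 0)) v = qf d a v + (\<Sum>x<d. c * (v x)^2)"
    unfolding qf_def by (simp add: distrib_left distrib_right sum.distrib diag)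
  moreover have "qf d a v \<ge> - (\<Sum>x<d. \<Sum>y<d. \<bar>a x y\<bar> * ((v x)^2 + (v y)^2) / 2)"
  proof -
    have "v x * a x y * v y \<ge> - (\<bar>a x y\<bar> * ((v x)^2 + (v y)^2) / 2)" for x y
    proof -
      have h1: "\<bar>v x * v y\<bar> \<le> ((v x)^2 + (v y)^2) / 2"
        using sum_squares_bound[of "\<bar>v x\<bar>" "\<bar>v y\<bar>"] by (simp add: abs_mult power2_abs)
      have "- (v x * a x y * v y) \<le> \<bar>v x * a x y * v y\<bar>" by (rule abs_ge_minus_self)
      also have "\<dots> = \<bar>a x y\<bar> * \<bar>v x * v y\<bar>" by (simp add: abs_mult mult_ac)
      also have "\<dots> \<le> \<bar>a x y\<bar> * (((v x)^2 + (v y)^2) / 2)"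
        by (rule mult_left_mono[OF h1]) simp
      finally show ?thesis by simp
    qed
    then show ?thesis unfolding qf_def
      by (simp add: sum_negf[symmetric]) (intro sum_mono, simp)
  qed
  moreover have "(\<Sum>x<d. \<Sum>y<d. \<bar>a x y\<bar> * ((v x)^2 + (v y)^2) / 2) \<le> (\<Sum>x<d. c * (v x)^2)"
  proof -
    have "(\<Sum>x<d. \<Sum>y<d. \<bar>a x y\<bar> * ((v x)^2 + (v y)^2) / 2)
        = ((\<Sum>x<d. (v x)^2 * (\<Sum>y<d. \<bar>a x y\<bar>)) + (\<Sum>y<d. (v y)^2 * (\<Sum>x<d. \<bar>a x y\<bar>))) / 2"
    proof -
      have e1: "(\<Sum>x<d. \<Sum>y<d. \<bar>a x y\<bar> * ((v x)^2 + (v y)^2) / 2) = ((\<Sum>x<d. \<Sum>y<d. \<bar>a x y\<bar> * (v x)^2) + (\<Sum>x<d. \<Sum>y<d. \<bar>a x y\<bar> * (v y)^2)) / 2"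
      proof -
        have "(\<Sum>x<d. \<Sum>y<d. \<bar>a x y\<bar> * ((v x)^2 + (v y)^2) / 2) = (\<Sum>x<d. \<Sum>y<d. (\<bar>a x y\<bar> * (v x)^2 + \<bar>a x y\<bar> * (v y)^2)) / 2"
          by (simp add: sum_divide_distrib distrib_left)
        also have "\<dots> = ((\<Sum>x<d. \<Sum>y<d. \<bar>a x y\<bar> * (v x)^2) + (\<Sum>x<d. \<Sum>y<d. \<bar>a x y\<bar> * (v y)^2)) / 2"
          by (simp add: sum.distrib)
        finally show ?thesis .
      qed
      have e2: "(\<Sum>x<d. \<Sum>y<d. \<bar>a x y\<bar> * (v x)^2) = (\<Sum>x<d. (v x)^2 * (\<Sum>y<d. \<bar>a x y\<bar>))"
        by (simp add: sum_distrib_left mult.commute)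
      have e3: "(\<Sum>x<d. \<Sum>y<d. \<bar>a x y\<bar> * (v y)^2) = (\<Sum>y<d. (v y)^2 * (\<Sum>x<d. \<bar>a x y\<bar>))"
        by (subst sum.swap) (simp add: sum_distrib_left mult.commute)
      show ?thesis unfolding e1 e2 e3 ..
    qed
    also have "\<dots> \<le> ((\<Sum>x<d. (v x)^2 * c) + (\<Sum>y<d. (v y)^2 * c)) / 2"
      by (intro divide_right_mono add_mono sum_mono mult_left_mono rows cols) auto
    also have "\<dots> = (\<Sum>x<d. c * (v x)^2)" by (simp add: mult.commute)
    finally show ?thesis .
  qed
  ultimately show ?thesis by linarith
qed

lemma mp_sign:
  assumes s1: "\<And>u. u < d \<Longrightarrow> s u * s u = 1"
    and sa: "\<And>u v. u < d \<Longrightarrow> v < d \<Longrightarrow> a u v = s u * s v * \<bar>a u v\<bar>"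
  shows "x < d \<Longrightarrow> y < d \<Longrightarrow> mp d a k x y = s x * s y * mp d (\<lambda>u v. \<bar>a u v\<bar>) k x y"
proof (induction k arbitrary: y)
  case 0 then show ?case using s1 by auto
next
  case (Suc k)
  have "mp d a (Suc k) x y = (\<Sum>u<d. (s x * s u * mp d (\<lambda>u v. \<bar>a u v\<bar>) k x u) * (s u * s y * \<bar>a u y\<bar>))"
    using Suc by (simp, intro sum.cong refl) (metis lessThan_iff sa)
  also have "\<dots> = (\<Sum>u<d. s x * s y * (mp d (\<lambda>u v. \<bar>a u v\<bar>) k x u * \<bar>a u y\<bar>))"
  proof (intro sum.cong refl)
    fix u assume "u \<in> {..<d}"
    then have "s u * s u = 1" using s1 by auto
    then show "s x * s u * mp d (\<lambda>u v. \<bar>a u v\<bar>) k x u * (s u * s y * \<bar>a u y\<bar>) = s x * s y * (mp d (\<lambda>u v. \<bar>a u v\<bar>) k x u * \<bar>a u y\<bar>)"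
      by (metis (no_types, lifting) mult.assoc mult.commute mult.left_commute mult_1)
  qed
  finally show ?case by (simp add: sum_distrib_left)
qed

lemma mp_nonneg: "(\<And>u v. a u v \<ge> 0) \<Longrightarrow> mp d a k x y \<ge> 0"
  by (induction k arbitrary: y) (auto intro!: sum_nonneg)

lemma mp_block:
  assumes z: "\<And>u v. u < d \<Longrightarrow> v < d \<Longrightarrow> blk u \<noteq> blk v \<Longrightarrow> a u v = 0"
  shows "x < d \<Longrightarrow> y < d \<Longrightarrow> blk x \<noteq> blk y \<Longrightarrow> mp d a k x y = 0"
proof (induction k arbitrary: y)
  case 0 then show ?case by auto
next
  case (Suc k)
  have "mp d a k x u * a u y = 0" if "u < d" for u
    using Suc z[of u y] that by (cases "blk u = blk x") auto
  then have "(\<Sum>u<d. mp d a k x u * a u y) = 0" by (intro sum.neutral) auto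
  then show ?case by simp
qed

lemma cplx_psd:
  fixes r :: "nat \<Rightarrow> nat \<Rightarrow> real" and v :: "nat \<Rightarrow> complex"
  assumes s: "\<And>i j. i < d \<Longrightarrow> j < d \<Longrightarrow> r i j = r j i" and p: "\<And>u. qf d r u \<ge> 0"
  defines "q \<equiv> (\<Sum>i<d. \<Sum>j<d. cnj (v i) * complex_of_real (r i j) * v j)"
  shows "Im q = 0 \<and> Re q \<ge> 0"
proof
  have "Im q = (\<Sum>i<d. \<Sum>j<d. r i j * (Re (v i) * Im (v j))) - (\<Sum>i<d. \<Sum>j<d. r i j * (Im (v i) * Re (v j)))"
    unfolding q_def by (simp add: Im_sum sum_subtractf[symmetric] algebra_simps)
  also have "(\<Sum>i<d. \<Sum>j<d. r i j * (Im (v i) * Re (v j))) = (\<Sum>j<d. \<Sum>i<d. r i j * (Im (v i) * Re (v j)))"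
    by (rule sum.swap)
  also have "\<dots> = (\<Sum>i<d. \<Sum>j<d. r i j * (Re (v i) * Im (v j)))"
    using s by (intro sum.cong refl) (simp add: mult.commute)
  finally show "Im q = 0" by simp
  have "Re q = qf d r (\<lambda>i. Re (v i)) + qf d r (\<lambda>i. Im (v i))"
    unfolding q_def qf_def by (simp add: Re_sum sum.distrib[symmetric] algebra_simps)
  then show "Re q \<ge> 0" using p[of "\<lambda>i. Re (v i)"] p[of "\<lambda>i. Im (v i)"] by simp
qed



definition hr :: "nat \<Rightarrow> nat \<Rightarrow> (nat \<Rightarrow> real) \<Rightarrow> (nat \<Rightarrow> nat \<Rightarrow> real) \<Rightarrow> (nat \<Rightarrow> real) \<Rightarrow> nat \<Rightarrow> nat \<Rightarrow> real" where
  "hr m n b w \<Gamma> x y = (let N = m + n in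
     - (\<Sum>i\<in>{1..N}. b i * (if x = y then zb (N-i) x else 0))
     - (\<Sum>(i,j)\<in>{(i,j). i \<in> {1..N} \<and> j \<in> {1..N} \<and> j < i}. w i j * (if x = y then zb (N-i) x * zb (N-j) x else 0))
     - (\<Sum>i\<in>{1..N}. \<Gamma> i * (if fl (N-i) x y then 1 else 0)))"

lemma szz_entry:
  assumes i: "1 \<le> i" "i \<le> N" and j: "1 \<le> j" "j \<le> N" and x: "x < 2^N" and y: "y < 2^N"
  shows "(sigma_at N sigma_z i * sigma_at N sigma_z j) $$ (x,y) = (if x = y then complex_of_real (zb (N-i) x * zb (N-j) x) else 0)"
proof -
  have si: "sigma_at N sigma_z i \<in> carrier_mat (2^N) (2^N)" by (rule sigma_at_carrier) (use i in \<open>auto simp: sigma_z_def\<close>)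
  have sj: "sigma_at N sigma_z j \<in> carrier_mat (2^N) (2^N)" by (rule sigma_at_carrier) (use j in \<open>auto simp: sigma_z_def\<close>)
  have "(sigma_at N sigma_z i * sigma_at N sigma_z j) $$ (x,y) = (\<Sum>k<2^N. sigma_at N sigma_z i $$ (x,k) * sigma_at N sigma_z j $$ (k,y))"
    using si sj x y by (simp add: scalar_prod_def lessThan_atLeast0)
  also have "\<dots> = (\<Sum>k<2^N. if k = x then (if x = y then complex_of_real (zb (N-i) x * zb (N-j) x) else 0) else 0)"
    using x y by (intro sum.cong refl) (auto simp: sz_entry[OF i] sz_entry[OF j])
  also have "\<dots> = (if x = y then complex_of_real (zb (N-i) x * zb (N-j) x) else 0)"
    using x by simp
  finally show ?thesis .
qed

lemma ham_carrier: "qbm_hamiltonian m n b w \<Gamma> \<in> carrier_mat (2^(m+n)) (2^(m+n))"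
  by (simp add: qbm_hamiltonian_def Let_def)

lemma ham_entry:
  assumes x: "x < 2^(m+n)" and y: "y < 2^(m+n)"
  shows "qbm_hamiltonian m n b w \<Gamma> $$ (x,y) = complex_of_real (hr m n b w \<Gamma> x y)"
proof -
  define N where "N = m + n"
  have x': "x < 2^N" and y': "y < 2^N" using x y N_def by auto
  have 1: "(\<Sum>i\<in>{1..N}. complex_of_real (b i) * sigma_at N sigma_z i $$ (x,y))
      = complex_of_real (\<Sum>i\<in>{1..N}. b i * (if x = y then zb (N-i) x else 0))"
    unfolding of_real_sum by (intro sum.cong refl) (auto simp: sz_entry[OF _ _ x' y'])
  have 2: "(\<Sum>(i,j)\<in>{(i,j). i \<in> {1..N} \<and> j \<in> {1..N} \<and> j < i}. complex_of_real (w i j) * (sigma_at N sigma_z i * sigma_at N sigma_z j) $$ (x,y))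
      = complex_of_real (\<Sum>(i,j)\<in>{(i,j). i \<in> {1..N} \<and> j \<in> {1..N} \<and> j < i}. w i j * (if x = y then zb (N-i) x * zb (N-j) x else 0))"
    unfolding of_real_sum by (intro sum.cong refl) (auto simp: szz_entry[OF _ _ _ _ x' y'])
  have 3: "(\<Sum>i\<in>{1..N}. complex_of_real (\<Gamma> i) * sigma_at N sigma_x i $$ (x,y))
      = complex_of_real (\<Sum>i\<in>{1..N}. \<Gamma> i * (if fl (N-i) x y then 1 else 0))"
    unfolding of_real_sum by (intro sum.cong refl) (auto simp: sx_entry[OF _ _ x' y'])
  have "qbm_hamiltonian m n b w \<Gamma> $$ (x,y) =
     - (\<Sum>i\<in>{1..N}. complex_of_real (b i) * sigma_at N sigma_z i $$ (x,y))
     - (\<Sum>(i,j)\<in>{(i,j). i \<in> {1..N} \<and> j \<in> {1..N} \<and> j < i}. complex_of_real (w i j) * (sigma_at N sigma_z i * sigma_at N sigma_z j) $$ (x,y))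
     - (\<Sum>i\<in>{1..N}. complex_of_real (\<Gamma> i) * sigma_at N sigma_x i $$ (x,y))"
    unfolding qbm_hamiltonian_def Let_def N_def[symmetric] using x' y' by (simp only: index_mat)
  also have "\<dots> = complex_of_real (hr m n b w \<Gamma> x y)"
    unfolding hr_def Let_def N_def[symmetric] 1 2 3 by (simp only: of_real_diff of_real_minus)
  finally show ?thesis .
qed



lemma fl_uniq: "fl a x y \<Longrightarrow> fl a' x y \<Longrightarrow> a = a'"
  unfolding fl_def by blast

lemma fl_neq: "fl a x y \<Longrightarrow> x \<noteq> y"
  unfolding fl_def by blast

lemma fl_zb_other: "fl a x y \<Longrightarrow> a' \<noteq> a \<Longrightarrow> zb a' x = zb a' y"
  unfolding fl_def zb_def by auto

lemma fl_zb_same: "fl a x y \<Longrightarrow> zb a x * zb a y = -1"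
  unfolding fl_def zb_def by auto

lemma zb_sq: "zb a x * zb a x = 1"
  unfolding zb_def by auto

lemma fl_block: "fl a x y \<Longrightarrow> a < n \<Longrightarrow> x div 2^n = y div 2^n"
proof -
  assume f: "fl a x y" and a: "a < n"
  have "drop_bit n x = drop_bit n y"
  proof (rule bit_eqI)
    fix j
    have "n + j \<noteq> a" using a by auto
    then show "bit (drop_bit n x) j = bit (drop_bit n y) j"
      using f unfolding fl_def by (simp add: bit_drop_bit_eq)
  qed
  then show ?thesis by (simp add: drop_bit_eq_div)
qed

lemma fl_witness: "fl a 0 (2^a)"
  unfolding fl_def by (auto simp: bit_exp_iff)

lemma hr_sym: "hr m n b w \<Gamma> x y = hr m n b w \<Gamma> y x"
  by (cases "x = y") (simp_all add: hr_def fl_sym)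

lemma hr_off: "x \<noteq> y \<Longrightarrow> hr m n b w \<Gamma> x y = - (\<Sum>i\<in>{1..m+n}. \<Gamma> i * (if fl (m+n-i) x y then 1 else 0))"
  by (simp add: hr_def Let_def)

lemma hr_flip:
  assumes k: "k \<in> {1..m+n}" and f: "fl (m+n-k) x y"
  shows "hr m n b w \<Gamma> x y = - \<Gamma> k"
proof -
  have "(\<Sum>i\<in>{1..m+n}. \<Gamma> i * (if fl (m+n-i) x y then 1 else 0)) = (\<Sum>i\<in>{1..m+n}. if i = k then \<Gamma> k else 0)"
  proof (intro sum.cong refl)
    fix i assume i: "i \<in> {1..m+n}"
    have "fl (m+n-i) x y \<longleftrightarrow> i = k"
    proof
      assume "fl (m+n-i) x y"
      then have "m+n-i = m+n-k" using fl_uniq f by blast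
      then show "i = k" using i k by auto
    qed (use f in auto)
    then show "\<Gamma> i * (if fl (m+n-i) x y then 1 else 0) = (if i = k then \<Gamma> k else 0)" by auto
  qed
  then show ?thesis using k hr_off[OF fl_neq[OF f]] by simp
qed

lemma hr_noflip:
  assumes "x \<noteq> y" and "\<forall>i\<in>{1..m+n}. \<not> fl (m+n-i) x y"
  shows "hr m n b w \<Gamma> x y = 0"
  using assms by (simp add: hr_off)

lemma hr_block:
  assumes G: "\<forall>i\<in>{1..m}. \<Gamma> i = 0" and xy: "x div 2^n \<noteq> y div 2^n"
  shows "hr m n b w \<Gamma> x y = 0"
proof -
  have "x \<noteq> y" using xy by auto
  moreover have "\<Gamma> i * (if fl (m+n-i) x y then 1 else 0) = 0" if i: "i \<in> {1..m+n}" for i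
  proof (cases "i \<le> m")
    case True then show ?thesis using G i by auto
  next
    case False
    then have "m + n - i < n" using i by auto
    then have "\<not> fl (m+n-i) x y" using fl_block xy by blast
    then show ?thesis by simp
  qed
  ultimately show ?thesis unfolding hr_off[OF \<open>x \<noteq> y\<close>] by (subst sum.neutral) auto
qed

definition sgn_vec :: "nat \<Rightarrow> nat \<Rightarrow> (nat \<Rightarrow> real) \<Rightarrow> nat \<Rightarrow> real" where
  "sgn_vec m n \<Gamma> x = (\<Prod>i\<in>{i\<in>{1..m+n}. \<Gamma> i > 0}. zb (m+n-i) x)"

lemma sgn_sq: "sgn_vec m n \<Gamma> x * sgn_vec m n \<Gamma> x = 1"
  unfolding sgn_vec_def prod.distrib[symmetric] zb_sq by simp

lemma sgn_flip:
  assumes k: "k \<in> {1..m+n}" and f: "fl (m+n-k) x y"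
  shows "sgn_vec m n \<Gamma> x * sgn_vec m n \<Gamma> y = (if \<Gamma> k > 0 then -1 else 1)"
proof -
  let ?P = "{i\<in>{1..m+n}. \<Gamma> i > 0}"
  have "sgn_vec m n \<Gamma> x * sgn_vec m n \<Gamma> y = (\<Prod>i\<in>?P. zb (m+n-i) x * zb (m+n-i) y)"
    unfolding sgn_vec_def prod.distrib ..
  also have "\<dots> = (\<Prod>i\<in>?P. if i = k then -1 else 1)"
  proof (intro prod.cong refl)
    fix i assume i: "i \<in> ?P"
    show "zb (m+n-i) x * zb (m+n-i) y = (if i = k then -1 else 1)"
    proof (cases "i = k")
      case True then show ?thesis using fl_zb_same[OF f] by simp
    next
      case False
      then have "m+n-i \<noteq> m+n-k" using i k by auto
      then show ?thesis using fl_zb_other[OF f] zb_sq False by metis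
    qed
  qed
  also have "\<dots> = (if \<Gamma> k > 0 then -1 else 1)"
    using k by (simp add: prod.delta)
  finally show ?thesis .
qed

lemma hr_sign:
  assumes c: "\<bar>hr m n b w \<Gamma> u u\<bar> \<le> c"
  defines "M \<equiv> \<lambda>u v. hr m n b w \<Gamma> u v + (if u = v then c else 0)"
  shows "M u v = sgn_vec m n \<Gamma> u * sgn_vec m n \<Gamma> v * \<bar>M u v\<bar>"
proof (cases "u = v")
  case True
  then have "M u v \<ge> 0" using c unfolding M_def by auto
  then show ?thesis using True sgn_sq by simp
next
  case False
  show ?thesis
  proof (cases "\<exists>k\<in>{1..m+n}. fl (m+n-k) u v")
    case True
    then obtain k where k: "k \<in> {1..m+n}" and f: "fl (m+n-k) u v" by blast
    have "M u v = - \<Gamma> k" unfolding M_def using False hr_flip[OF k f] by simp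
    then show ?thesis using sgn_flip[OF k f] by auto
  next
    case nf: False
    then have "M u v = 0" unfolding M_def using False hr_noflip by auto
    then show ?thesis by simp
  qed
qed



lemma msum_entry:
  assumes L: "\<And>i. i < 2^m \<Longrightarrow> \<rho>L i \<in> carrier_mat (2^n) (2^n)"
    and r: "r < 2^(m+n)" and s: "s < 2^(m+n)"
  shows "msum (2^(m+n)) (\<lambda>i. kron (outer (unit_vec (2^m) i)) (\<rho>L i)) {..<2^m} $$ (r,s)
    = (if r div 2^n = s div 2^n then \<rho>L (r div 2^n) $$ (r mod 2^n, s mod 2^n) else 0)"
proof -
  have r': "r < 2^m * 2^n" and s': "s < 2^m * 2^n" using r s by (auto simp: power_add)
  have rd: "r div 2^n < 2^m" and sd: "s div 2^n < 2^m" using r' s'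
    by (auto simp: less_mult_imp_div_less)
  have oc: "outer (unit_vec (2^m) i) \<in> carrier_mat (2^m) (2^m)" for i
    by (simp add: outer_def)
  have "msum (2^(m+n)) (\<lambda>i. kron (outer (unit_vec (2^m) i)) (\<rho>L i)) {..<2^m} $$ (r,s)
      = (\<Sum>i<2^m. kron (outer (unit_vec (2^m) i)) (\<rho>L i) $$ (r,s))"
    using r s by (simp add: msum_def)
  also have "\<dots> = (\<Sum>i<2^m. if i = r div 2^n then (if r div 2^n = s div 2^n then \<rho>L (r div 2^n) $$ (r mod 2^n, s mod 2^n) else 0) else 0)"
  proof (intro sum.cong refl)
    fix i :: nat assume i: "i \<in> {..<2^m}"
    show "kron (outer (unit_vec (2^m) i)) (\<rho>L i) $$ (r,s) = (if i = r div 2^n then (if r div 2^n = s div 2^n then \<rho>L (r div 2^n) $$ (r mod 2^n, s mod 2^n) else 0) else 0)"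
    proof -
      have Li: "\<rho>L i \<in> carrier_mat (2^n) (2^n)" using i L by auto
      show ?thesis unfolding kron_index[OF oc Li r' s'] using i rd sd by (simp add: outer_def)
    qed
  qed
  also have "\<dots> = (if r div 2^n = s div 2^n then \<rho>L (r div 2^n) $$ (r mod 2^n, s mod 2^n) else 0)"
    using rd by simp
  finally show ?thesis .
qed

lemma suminf_sandwich: "summable f \<Longrightarrow> (a::real) * suminf f * c = (\<Sum>k. a * f k * c)"
  using suminf_mult[of f a] suminf_mult2[of "\<lambda>k. a * f k" c] summable_mult[of f a] by simp

context
  fixes m n :: nat and b \<Gamma> :: "nat \<Rightarrow> real" and w :: "nat \<Rightarrow> nat \<Rightarrow> real"
begin

definition "dd = (2::nat)^(m+n)"
definition "hh = hr m n b w \<Gamma>"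
definition "ex x y = (\<Sum>k. mp dd hh k x y / fact k)"
definition "cc = (\<Sum>x<dd. \<Sum>y<dd. \<bar>hh x y\<bar>)"
definition "MM = (\<lambda>u v. hh u v + (if u = v then cc else 0))"
definition "eM x y = (\<Sum>k. mp dd MM k x y / fact k)"

lemma E_carrier: "mat_exp (qbm_hamiltonian m n b w \<Gamma>) \<in> carrier_mat dd dd"
  using ham_carrier[of m n b w \<Gamma>] by (simp add: mat_exp_def dd_def)

lemma E_entry:
  assumes x: "x < dd" and y: "y < dd"
  shows "mat_exp (qbm_hamiltonian m n b w \<Gamma>) $$ (x,y) = complex_of_real (ex x y)"
proof -
  have H: "qbm_hamiltonian m n b w \<Gamma> \<in> carrier_mat dd dd" using ham_carrier by (simp add: dd_def)
  have pw: "(qbm_hamiltonian m n b w \<Gamma> ^\<^sub>m k) $$ (x,y) = complex_of_real (mp dd hh k x y)" for k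
    by (rule mp_bridge[OF H _ x y]) (simp add: ham_entry dd_def hh_def)
  have "mat_exp (qbm_hamiltonian m n b w \<Gamma>) $$ (x,y) = (\<Sum>k. complex_of_real (mp dd hh k x y / fact k))"
    using H x y by (simp add: mat_exp_def pw)
  also have "\<dots> = complex_of_real (ex x y)"
    unfolding ex_def by (rule suminf_of_real[symmetric], rule mp_summable_gen'[OF x y])
  finally show ?thesis .
qed

lemma ex_shift: "x < dd \<Longrightarrow> y < dd \<Longrightarrow> ex x y = exp (- cc) * eM x y"
  unfolding ex_def eM_def MM_def using mp_exp_shift[of x dd y hh cc]
  by (simp add: exp_minus field_simps)

lemma hh_sym: "hh x y = hh y x" unfolding hh_def by (rule hr_sym)

lemma MM_sym: "MM x y = MM y x" unfolding MM_def using hh_sym by auto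

lemma ex_sym: "x < dd \<Longrightarrow> y < dd \<Longrightarrow> ex x y = ex y x"
  unfolding ex_def using mp_sym[of dd hh, OF hh_sym] by simp

lemma cc_diag: "u < dd \<Longrightarrow> \<bar>hh u u\<bar> \<le> cc"
proof -
  assume u: "u < dd"
  have "\<bar>hh u u\<bar> \<le> (\<Sum>y<dd. \<bar>hh u y\<bar>)" using u by (intro member_le_sum) auto
  also have "\<dots> \<le> cc" unfolding cc_def using u
    by (intro member_le_sum[of u, where f="\<lambda>x. \<Sum>y<dd. \<bar>hh x y\<bar>"]) (simp_all add: sum_nonneg)
  finally show ?thesis .
qed

lemma qf_eM: "qf dd eM v \<ge> 0"
proof -
  have sm: "summable (\<lambda>k. v x * (mp dd MM k x y / fact k) * v y)" if "x < dd" "y < dd" for x y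
    using mp_summable_gen'[OF that, of MM] by (intro summable_mult summable_mult2)
  have "qf dd eM v = (\<Sum>x<dd. \<Sum>y<dd. \<Sum>k. v x * (mp dd MM k x y / fact k) * v y)"
    unfolding qf_def eM_def
    by (intro sum.cong refl suminf_sandwich mp_summable_gen') auto
  also have "\<dots> = (\<Sum>x<dd. \<Sum>k. \<Sum>y<dd. v x * (mp dd MM k x y / fact k) * v y)"
    by (intro sum.cong refl suminf_sum[symmetric] sm) auto
  also have "\<dots> = (\<Sum>k. \<Sum>x<dd. \<Sum>y<dd. v x * (mp dd MM k x y / fact k) * v y)"
    by (intro suminf_sum[symmetric] summable_sum sm) auto
  also have "\<dots> \<ge> 0"
  proof (rule suminf_nonneg)
    show "summable (\<lambda>k. \<Sum>x<dd. \<Sum>y<dd. v x * (mp dd MM k x y / fact k) * v y)"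
      by (intro summable_sum sm) auto
    fix k
    have "qf dd (mp dd MM k) v \<ge> 0"
    proof (rule mp_psd)
      show "\<And>u v. MM u v = MM v u" by (rule MM_sym)
      show "\<And>v. qf dd MM v \<ge> 0" unfolding MM_def by (rule gersh) (simp add: cc_def)
    qed
    moreover have "(\<Sum>x<dd. \<Sum>y<dd. v x * (mp dd MM k x y / fact k) * v y) = qf dd (mp dd MM k) v / fact k"
      unfolding qf_def by (simp add: sum_divide_distrib)
    ultimately show "0 \<le> (\<Sum>x<dd. \<Sum>y<dd. v x * (mp dd MM k x y / fact k) * v y)" by simp
  qed
  finally show ?thesis .
qed

end



lemma qf_delta: "x < d \<Longrightarrow> qf d A (\<lambda>i. if i = x then 1 else 0) = A x x"
proof -
  assume x: "x < d"
  have "qf d A (\<lambda>i. if i = x then 1 else 0) = (\<Sum>i<d. \<Sum>j<d. if i = x then (if j = x then A i j else 0) else 0)"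
    unfolding qf_def by (intro sum.cong refl) auto
  also have "\<dots> = (\<Sum>i<d. if i = x then A i x else 0)"
  proof (intro sum.cong refl)
    fix i
    have "(\<Sum>j<d. if j = x then A i j else 0) = A i x" using x by simp
    then show "(\<Sum>j<d. if i = x then (if j = x then A i j else 0) else 0) = (if i = x then A i x else 0)"
      by (cases "i = x") auto
  qed
  also have "\<dots> = A x x" using x by simp
  finally show ?thesis .
qed

context
  fixes m n :: nat and b \<Gamma> :: "nat \<Rightarrow> real" and w :: "nat \<Rightarrow> nat \<Rightarrow> real"
begin

lemma mpMM_diag_nonneg: "x < dd m n \<Longrightarrow> mp (dd m n) (MM m n b \<Gamma> w) k x x \<ge> 0"
proof -
  assume x: "x < dd m n"
  let ?e = "\<lambda>i. if i = x then 1 else (0::real)"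
  have "qf (dd m n) (mp (dd m n) (MM m n b \<Gamma> w) k) ?e \<ge> 0"
  proof (rule mp_psd)
    show "\<And>u v. MM m n b \<Gamma> w u v = MM m n b \<Gamma> w v u" by (rule MM_sym)
    show "\<And>v. qf (dd m n) (MM m n b \<Gamma> w) v \<ge> 0" unfolding MM_def by (rule gersh) (simp add: cc_def)
  qed
  also have "qf (dd m n) (mp (dd m n) (MM m n b \<Gamma> w) k) ?e = mp (dd m n) (MM m n b \<Gamma> w) k x x"
    by (rule qf_delta[OF x])
  finally show ?thesis .
qed

lemma eM_diag: "x < dd m n \<Longrightarrow> eM m n b \<Gamma> w x x \<ge> 1"
proof -
  assume x: "x < dd m n"
  have "(\<Sum>k\<in>{0}. mp (dd m n) (MM m n b \<Gamma> w) k x x / fact k) \<le> eM m n b \<Gamma> w x x"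
    unfolding eM_def
    by (rule sum_le_suminf[OF mp_summable_gen'[OF x x]]) (auto intro!: divide_nonneg_pos mpMM_diag_nonneg x)
  then show ?thesis by simp
qed

lemma ex_diag_pos: "x < dd m n \<Longrightarrow> ex m n b \<Gamma> w x x > 0"
proof -
  assume x: "x < dd m n"
  have "eM m n b \<Gamma> w x x > 0" using eM_diag[OF x] by linarith
  then show ?thesis using ex_shift[OF x x] by simp
qed

lemma T_pos: "(\<Sum>x<dd m n. ex m n b \<Gamma> w x x) > 0"
proof (rule sum_pos)
  show "{..<dd m n} \<noteq> {}" by (simp add: dd_def lessThan_empty_iff)
qed (auto intro: ex_diag_pos)

lemma ex_block:
  assumes G: "\<forall>i\<in>{1..m}. \<Gamma> i = 0" and x: "x < dd m n" and y: "y < dd m n" and xy: "x div 2^n \<noteq> y div 2^n"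
  shows "ex m n b \<Gamma> w x y = 0"
proof -
  have "mp (dd m n) (hh m n b \<Gamma> w) k x y = 0" for k
    by (rule mp_block[where blk="\<lambda>u. u div 2^n", OF _ x y xy]) (auto simp: hh_def hr_block[OF G])
  then show ?thesis unfolding ex_def by simp
qed

lemma ex_flip:
  assumes k: "k \<in> {1..m}" and G: "\<Gamma> k \<noteq> 0"
  shows "ex m n b \<Gamma> w 0 (2^(m+n-k)) \<noteq> 0"
proof -
  define y0 where "y0 = (2::nat)^(m+n-k)"
  define s where "s = sgn_vec m n \<Gamma>"
  have k': "k \<in> {1..m+n}" using k by auto
  have x0: "0 < dd m n" by (simp add: dd_def)
  have y0: "y0 < dd m n" unfolding y0_def dd_def using k by (intro power_strict_increasing) auto
  have f: "fl (m+n-k) 0 y0" unfolding y0_def by (rule fl_witness)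
  have s1: "\<And>u. u < dd m n \<Longrightarrow> s u * s u = 1" unfolding s_def by (rule sgn_sq)
  have sa: "\<And>u v. u < dd m n \<Longrightarrow> v < dd m n \<Longrightarrow> MM m n b \<Gamma> w u v = s u * s v * \<bar>MM m n b \<Gamma> w u v\<bar>"
  proof -
    fix u v assume u: "u < dd m n" and v: "v < dd m n"
    have c: "\<bar>hr m n b w \<Gamma> u u\<bar> \<le> cc m n b \<Gamma> w" using cc_diag[OF u] by (simp add: hh_def)
    show "MM m n b \<Gamma> w u v = s u * s v * \<bar>MM m n b \<Gamma> w u v\<bar>"
      unfolding MM_def hh_def s_def by (rule hr_sign[OF c])
  qed
  let ?A = "\<lambda>u v. \<bar>MM m n b \<Gamma> w u v\<bar>"
  have "eM m n b \<Gamma> w 0 y0 = (\<Sum>j. s 0 * s y0 * (mp (dd m n) ?A j 0 y0 / fact j))"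
    unfolding eM_def by (intro suminf_cong) (simp add: mp_sign[OF s1 sa x0 y0])
  also have "\<dots> = s 0 * s y0 * (\<Sum>j. mp (dd m n) ?A j 0 y0 / fact j)"
    by (rule suminf_mult[OF mp_summable_gen'[OF x0 y0]])
  finally have eq: "eM m n b \<Gamma> w 0 y0 = s 0 * s y0 * (\<Sum>j. mp (dd m n) ?A j 0 y0 / fact j)" .
  have "(\<Sum>j\<in>{1}. mp (dd m n) ?A j 0 y0 / fact j) \<le> (\<Sum>j. mp (dd m n) ?A j 0 y0 / fact j)"
    by (rule sum_le_suminf[OF mp_summable_gen'[OF x0 y0]]) (auto intro!: divide_nonneg_pos mp_nonneg)
  moreover have "mp (dd m n) ?A 1 0 y0 = \<bar>MM m n b \<Gamma> w 0 y0\<bar>" by (rule mp_one[OF x0])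
  moreover have "MM m n b \<Gamma> w 0 y0 = - \<Gamma> k"
    using hr_flip[OF k' f] f fl_neq unfolding MM_def hh_def by auto
  ultimately have pos: "(\<Sum>j. mp (dd m n) ?A j 0 y0 / fact j) > 0" using G by simp
  have "s 0 * s y0 \<noteq> 0" unfolding s_def using sgn_flip[OF k' f] by auto
  then have "eM m n b \<Gamma> w 0 y0 \<noteq> 0" using eq pos by simp
  then show ?thesis using ex_shift[OF x0 y0] y0_def by simp
qed

end

lemma qf_scale: "qf d (\<lambda>x y. c * A x y) u = c * qf d A u"
  unfolding qf_def by (simp add: sum_distrib_left mult_ac)

lemma qf_cong: "(\<And>x y. x < d \<Longrightarrow> y < d \<Longrightarrow> A x y = B x y) \<Longrightarrow> qf d A u = qf d B u"
  unfolding qf_def by (intro sum.cong refl) auto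

theorem mainTheorem10:
  fixes m n :: nat and b \<Gamma> :: "nat \<Rightarrow> real" and w :: "nat \<Rightarrow> nat \<Rightarrow> real"
  assumes "m \<ge> 1" and "n \<ge> 1"
  shows "CQ_LVM m n (qbm_state m n b w \<Gamma>) \<longleftrightarrow> (\<forall>i \<in> {1..m}. \<Gamma> i = 0)"
proof -
  define E where "E = mat_exp (qbm_hamiltonian m n b w \<Gamma>)"
  define T where "T = (\<Sum>x<dd m n. ex m n b \<Gamma> w x x)"
  define \<rho> where "\<rho> = qbm_state m n b w \<Gamma>"
  have Tpos: "T > 0" unfolding T_def by (rule T_pos)
  have Ec: "E \<in> carrier_mat (dd m n) (dd m n)" unfolding E_def by (rule E_carrier)
  have Ee: "\<And>x y. x < dd m n \<Longrightarrow> y < dd m n \<Longrightarrow> E $$ (x,y) = complex_of_real (ex m n b \<Gamma> w x y)"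
    unfolding E_def by (rule E_entry)
  have tr: "mtrace E = complex_of_real T"
    unfolding mtrace_def T_def of_real_sum using Ec Ee by (intro sum.cong) auto
  have rdef: "\<rho> = (1 / complex_of_real T) \<cdot>\<^sub>m E"
    unfolding \<rho>_def qbm_state_def Let_def E_def[symmetric] tr ..
  have rc: "\<rho> \<in> carrier_mat (dd m n) (dd m n)" using Ec rdef by simp
  have re: "\<And>x y. x < dd m n \<Longrightarrow> y < dd m n \<Longrightarrow> \<rho> $$ (x,y) = complex_of_real (ex m n b \<Gamma> w x y / T)"
    using Ec Ee rdef by simp
  have ddv: "dd m n = 2^(m+n)" by (simp add: dd_def)
  show ?thesis unfolding \<rho>_def[symmetric]
  proof
    assume CQ: "CQ_LVM m n \<rho>"
    show "\<forall>i\<in>{1..m}. \<Gamma> i = 0"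
    proof (rule ccontr)
      assume "\<not> (\<forall>i\<in>{1..m}. \<Gamma> i = 0)"
      then obtain k where k: "k \<in> {1..m}" and G: "\<Gamma> k \<noteq> 0" by auto
      from CQ obtain \<rho>L where L: "\<forall>i < 2^m. \<rho>L i \<in> carrier_mat (2^n) (2^n)"
        and eq: "\<rho> = msum (2^(m+n)) (\<lambda>i. kron (outer (unit_vec (2^m) i)) (\<rho>L i)) {..<2^m}"
        unfolding CQ_LVM_def by blast
      define y0 where "y0 = (2::nat)^(m+n-k)"
      have y0: "y0 < 2^(m+n)" unfolding y0_def using k by (intro power_strict_increasing) auto
      have "2^n \<le> y0" unfolding y0_def using k by (intro power_increasing) auto
      then have bd: "0 div 2^n \<noteq> y0 div (2::nat)^n" by (simp add: div_greater_zero_iff)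
      have "\<rho> $$ (0, y0) = 0"
        unfolding eq using msum_entry[of m \<rho>L n 0 y0] L y0 bd by simp
      moreover have "\<rho> $$ (0, y0) \<noteq> 0"
        using re[of 0 y0] y0 ddv ex_flip[where m=m and n=n and b=b and w=w and \<Gamma>=\<Gamma>, OF k G] Tpos unfolding y0_def by simp
      ultimately show False by simp
    qed
  next
    assume G: "\<forall>i\<in>{1..m}. \<Gamma> i = 0"
    define \<rho>L where "\<rho>L i = mat (2^n) (2^n) (\<lambda>(a,c). \<rho> $$ (i*2^n + a, i*2^n + c))" for i
    have Lc: "\<forall>i < 2^m. \<rho>L i \<in> carrier_mat (2^n) (2^n)" by (simp add: \<rho>L_def)
    have dens: "density_op (2^(m+n)) \<rho>"
      unfolding density_op_def
    proof (intro conjI)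
      show "\<rho> \<in> carrier_mat (2^(m+n)) (2^(m+n))" using rc ddv by simp
      show "hermitian \<rho>" unfolding hermitian_def
        using rc re ex_sym by simp
      show "psd \<rho>" unfolding psd_def
      proof (intro conjI ballI)
        show "square_mat \<rho>" using rc by simp
        fix v :: "complex vec" assume "v \<in> carrier_vec (dim_row \<rho>)"
        let ?r = "\<lambda>i j. ex m n b \<Gamma> w i j / T"
        have q: "(\<Sum>i<dim_row \<rho>. \<Sum>j<dim_row \<rho>. cnj (v $ i) * \<rho> $$ (i,j) * v $ j)
            = (\<Sum>i<dd m n. \<Sum>j<dd m n. cnj (v $ i) * complex_of_real (?r i j) * v $ j)"
          using rc re by (intro sum.cong) auto
        have "Im (\<Sum>i<dd m n. \<Sum>j<dd m n. cnj (v $ i) * complex_of_real (?r i j) * v $ j) = 0 \<and>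
              Re (\<Sum>i<dd m n. \<Sum>j<dd m n. cnj (v $ i) * complex_of_real (?r i j) * v $ j) \<ge> 0"
        proof (rule cplx_psd)
          show "\<And>i j. i < dd m n \<Longrightarrow> j < dd m n \<Longrightarrow> ?r i j = ?r j i" using ex_sym by simp
          fix u
          have "qf (dd m n) ?r u = qf (dd m n) (\<lambda>x y. (exp (- cc m n b \<Gamma> w) / T) * eM m n b \<Gamma> w x y) u"
            by (rule qf_cong) (simp add: ex_shift)
          also have "\<dots> = (exp (- cc m n b \<Gamma> w) / T) * qf (dd m n) (eM m n b \<Gamma> w) u" by (rule qf_scale)
          also have "\<dots> \<ge> 0" using Tpos qf_eM by simp
          finally show "qf (dd m n) ?r u \<ge> 0" .
        qed
        then show "let q = (\<Sum>i<dim_row \<rho>. \<Sum>j<dim_row \<rho>. cnj (v $ i) * \<rho> $$ (i,j) * v $ j) in Im q = 0 \<and> Re q \<ge> 0"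
          unfolding Let_def q .
      qed
      have "mtrace \<rho> = (\<Sum>i<dd m n. complex_of_real (ex m n b \<Gamma> w i i / T))"
        unfolding mtrace_def using rc re by (intro sum.cong) auto
      also have "\<dots> = complex_of_real (T / T)"
        unfolding T_def of_real_sum[symmetric] sum_divide_distrib ..
      finally show "mtrace \<rho> = 1" using Tpos by simp
    qed
    have eqm: "\<rho> = msum (2^(m+n)) (\<lambda>i. kron (outer (unit_vec (2^m) i)) (\<rho>L i)) {..<2^m}"
    proof (rule eq_matI)
      fix r s assume "r < dim_row (msum (2^(m+n)) (\<lambda>i. kron (outer (unit_vec (2^m) i)) (\<rho>L i)) {..<2^m})"
        "s < dim_col (msum (2^(m+n)) (\<lambda>i. kron (outer (unit_vec (2^m) i)) (\<rho>L i)) {..<2^m})"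
      then have r: "r < 2^(m+n)" and s: "s < 2^(m+n)" by (auto simp: msum_def)
      have me: "msum (2^(m+n)) (\<lambda>i. kron (outer (unit_vec (2^m) i)) (\<rho>L i)) {..<2^m} $$ (r,s)
          = (if r div 2^n = s div 2^n then \<rho>L (r div 2^n) $$ (r mod 2^n, s mod 2^n) else 0)"
        by (rule msum_entry[OF _ r s]) (use Lc in auto)
      show "\<rho> $$ (r,s) = msum (2^(m+n)) (\<lambda>i. kron (outer (unit_vec (2^m) i)) (\<rho>L i)) {..<2^m} $$ (r,s)"
      proof (cases "r div 2^n = s div 2^n")
        case True
        have "\<rho>L (r div 2^n) $$ (r mod 2^n, s mod 2^n) = \<rho> $$ (r div 2^n * 2^n + r mod 2^n, s div 2^n * 2^n + s mod 2^n)"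
          unfolding \<rho>L_def using True by simp
        also have "\<dots> = \<rho> $$ (r, s)" by (simp only: div_mult_mod_eq)
        finally show ?thesis unfolding me using True by simp
      next
        case False
        have "\<rho> $$ (r,s) = 0" using re[of r s] r s ddv ex_block[where m=m and n=n and b=b and w=w and \<Gamma>=\<Gamma>, OF G, of r s] False by simp
        then show ?thesis unfolding me using False by simp
      qed
    qed (use rc ddv in \<open>auto simp: msum_def\<close>)
    show "CQ_LVM m n \<rho>" unfolding CQ_LVM_def using dens Lc eqm by blast
  qed
qed


end
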